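(* For every integer $n\ge0$, as polynomials in $z$, $$\sum_{k=0}^n\binom nk^2\binom{-\imath z-\tfrac12+k}{n}=(-1)^n\,{}_3F_2\!\left(\begin{matrix}-n,\ n+1,\ \tfrac12-\imath z\\ 1,\ 1\end{matrix}\,\Big|\,1\right).$$ Equivalently, the polynomial $P_n(z)=\frac{\imath^n(n!)^3}{(2n)!}\sum_{k=0}^n\binom nk^2\binom{-\imath z-\frac12+k}{n}$ associated to $a_{n,k}=\binom{2n}{n}^{-1}\binom nk^2$ equals $\frac{(-\imath)^n(n!)^3}{(2n)!}\,{}_3F_2\!\left(\begin{smallmatrix}-n,\ n+1,\ \frac12-\imath z\\ 1,\ 1\end{smallmatrix}\big|1\right)$.
   Context: $\imath=\sqrt{-1}$. For complex $x$, $\binom{x}{n}=\frac{1}{n!}\prod_{\ell=0}^{n-1}(x-\ell)$; $(x)_k=x(x+1)\cdots(x+k-1)$. ${}_3F_2\!\left(\begin{smallmatrix}a_1,a_2,a_3\\ b_1,b_2\end{smallmatrix}\big|x\right)=\sum_{k\ge0}\frac{(a_1)_k(a_2)_k(a_3)_k}{(b_1)_k(b_2)_k}\frac{x^k}{k!}$ (terminating here since $a_1=-n$). *)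

theory Defs
  imports Complex_Main
begin

text \<open>Generalized hypergeometric 3F2 with upper parameter a1 = -n (terminating),
  written as the finite sum over k = 0..n (terms with k > n vanish since (-n)_k = 0).\<close>
definition hyp3F2_term :: "nat \<Rightarrow> complex \<Rightarrow> complex \<Rightarrow> complex \<Rightarrow> complex \<Rightarrow> complex \<Rightarrow> complex" where
  "hyp3F2_term n a2 a3 b1 b2 x =
     (\<Sum>k=0..n. pochhammer (- of_nat n) k * pochhammer a2 k * pochhammer a3 k
        / (pochhammer b1 k * pochhammer b2 k) * x ^ k / fact k)"

end

theory Submission
  imports Defs "HOL-Computational_Algebra.Formal_Power_Series"
begin

lemma natA:
  assumes "j \<le> n"
  shows "(\<Sum>k=0..n. (n choose k)^2 * (k choose (n-j))) = (n choose j) * ((n+j) choose j)"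
proof -
  have "(\<Sum>k=0..n. (n choose k)^2 * (k choose (n-j))) = (\<Sum>k=(n-j)..n. (n choose k)^2 * (k choose (n-j)))"
    by (rule sum.mono_neutral_right) auto
  also have "\<dots> = (\<Sum>i=0..j. (n choose (i+(n-j)))^2 * ((i+(n-j)) choose (n-j)))"
    using sum.shift_bounds_cl_nat_ivl[of "\<lambda>k. (n choose k)^2 * (k choose (n-j))" 0 "n-j" j] assms
    by simp
  also have "\<dots> = (\<Sum>i=0..j. (n choose j) * ((j choose i) * (n choose (j-i))))"
  proof (rule sum.cong[OF refl])
    fix i assume i: "i \<in> {0..j}"
    have m: "(n choose (i+(n-j))) * ((i+(n-j)) choose (n-j)) = (n choose (n-j)) * ((n-(n-j)) choose (i+(n-j)-(n-j)))"
      using i assms by (intro choose_mult) auto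
    have s1: "n choose (n-j) = n choose j" using assms by (simp add: binomial_symmetric[symmetric])
    have s2: "n choose (i+(n-j)) = n choose (j-i)"
      using i assms binomial_symmetric[of "i+(n-j)" n] by (auto simp: algebra_simps)
    show "(n choose (i+(n-j)))^2 * ((i+(n-j)) choose (n-j)) = (n choose j) * ((j choose i) * (n choose (j-i)))"
      using m s1 s2 assms by (simp add: power2_eq_square)
  qed
  also have "\<dots> = (n choose j) * ((j+n) choose j)"
    using vandermonde[of j n j] by (simp add: sum_distrib_left[symmetric] atLeast0AtMost)
  finally show ?thesis by (simp add: add.commute)
qed

definition L :: "nat \<Rightarrow> complex \<Rightarrow> complex" where
  "L n y = (\<Sum>k=0..n. of_nat ((n choose k)^2) * ((y + of_nat k) gchoose n))"

lemma Lexp: "L n y = (\<Sum>j=0..n. of_nat ((n choose j) * ((n+j) choose j)) * (y gchoose j))"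
proof -
  have V: "(y + of_nat k) gchoose n = (\<Sum>j=0..n. (y gchoose j) * of_nat (k choose (n-j)))" for k
    using gbinomial_Vandermonde[of y "of_nat k" n] by (simp add: binomial_gbinomial)
  have "L n y = (\<Sum>k=0..n. \<Sum>j=0..n. of_nat ((n choose k)^2) * ((y gchoose j) * of_nat (k choose (n-j))))"
    unfolding L_def V by (simp add: sum_distrib_left)
  also have "\<dots> = (\<Sum>j=0..n. \<Sum>k=0..n. of_nat ((n choose k)^2) * ((y gchoose j) * of_nat (k choose (n-j))))"
    by (rule sum.swap)
  also have "\<dots> = (\<Sum>j=0..n. (y gchoose j) * of_nat (\<Sum>k=0..n. (n choose k)^2 * (k choose (n-j))))"
    by (simp add: sum_distrib_left mult_ac)
  also have "\<dots> = (\<Sum>j=0..n. of_nat ((n choose j) * ((n+j) choose j)) * (y gchoose j))"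
  proof (rule sum.cong[OF refl])
    fix j assume j: "j \<in> {0..n}"
    have "(\<Sum>k=0..n. (n choose k)^2 * (k choose (n-j))) = (n choose j) * ((n+j) choose j)"
      using j natA by auto
    hence "of_nat (\<Sum>k=0..n. (n choose k)^2 * (k choose (n-j))) = (of_nat ((n choose j) * ((n+j) choose j)) :: complex)"
      by (simp only:)
    thus "(y gchoose j) * of_nat (\<Sum>k=0..n. (n choose k)^2 * (k choose (n-j))) = of_nat ((n choose j) * ((n+j) choose j)) * (y gchoose j)"
      by simp
  qed
  finally show ?thesis .
qed

lemma Lrefl: "L n (-1-y) = (-1)^n * L n y"
proof -
  have "L n (-1-y) = (\<Sum>k=0..n. of_nat ((n choose k)^2) * ((-1)^n * ((y + of_nat (n-k)) gchoose n)))"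
    unfolding L_def
  proof (rule sum.cong[OF refl])
    fix k assume k: "k \<in> {0..n}"
    have "-1 - y + of_nat k = - (y + 1 - of_nat k)" by simp
    hence "(-1 - y + of_nat k) gchoose n = (-1)^n * ((y + 1 - of_nat k + of_nat n - 1) gchoose n)"
      by (simp only: gbinomial_minus)
    also have "y + 1 - of_nat k + of_nat n - 1 = y + of_nat (n-k)" using k by (simp add: of_nat_diff)
    finally show "of_nat ((n choose k)^2) * ((-1 - y + of_nat k) gchoose n) =
       of_nat ((n choose k)^2) * ((-1)^n * ((y + of_nat (n-k)) gchoose n))" by simp
  qed
  also have "\<dots> = (\<Sum>k=0..n. of_nat ((n choose (n-k))^2) * ((-1)^n * ((y + of_nat (n-k)) gchoose n)))"
    by (rule sum.cong[OF refl]) (simp add: binomial_symmetric[symmetric])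
  also have "\<dots> = (\<Sum>k=0..n. of_nat ((n choose k)^2) * ((-1)^n * ((y + of_nat k) gchoose n)))"
    using sum.atLeastAtMost_rev[of "\<lambda>k. of_nat ((n choose k)^2) * ((-1)^n * ((y + of_nat k) gchoose n)) :: complex" 0 n]
    by simp
  also have "\<dots> = (-1)^n * L n y" unfolding L_def by (simp add: sum_distrib_left mult_ac)
  finally show ?thesis .
qed

theorem lemma5p9:
  fixes n :: nat and z :: complex
  shows "(\<Sum>k=0..n. of_nat ((n choose k)^2) * ((- \<i> * z - 1/2 + of_nat k) gchoose n))
         = (-1)^n * hyp3F2_term n (of_nat n + 1) (1/2 - \<i> * z) 1 1 1"
proof -
  define x where "x = - \<i> * z - 1/2"
  have a3: "1/2 - \<i> * z = x + 1" unfolding x_def by simp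
  have H: "hyp3F2_term n (of_nat n + 1) (x + 1) 1 1 1 = L n (-1-x)"
    unfolding hyp3F2_term_def Lexp
  proof (rule sum.cong[OF refl])
    fix k assume k: "k \<in> {0..n}"
    have p1: "pochhammer (- of_nat n) k = (-1)^k * fact k * (of_nat n gchoose k :: complex)"
      by (simp add: gbinomial_pochhammer)
    have p2: "pochhammer (of_nat n + 1) k = fact k * (of_nat (n+k) gchoose k :: complex)"
      by (simp add: gbinomial_pochhammer')
    have p3: "pochhammer (x + 1) k = fact k * ((x + of_nat k) gchoose k)"
      by (simp add: gbinomial_pochhammer')
    have p4: "(x + of_nat k) gchoose k = (-1)^k * ((-1-x) gchoose k)"
      by (simp add: gbinomial_negated_upper[of "-1-x"] algebra_simps)
    have p5: "pochhammer (1::complex) k = fact k" by (simp add: pochhammer_fact)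
    show "pochhammer (- of_nat n) k * pochhammer (of_nat n + 1) k * pochhammer (x + 1) k /
          (pochhammer 1 k * pochhammer 1 k) * 1 ^ k / fact k =
          of_nat ((n choose k) * ((n+k) choose k)) * ((-1-x) gchoose k)"
      unfolding p1 p2 p3 p4 p5 by (simp add: binomial_gbinomial field_simps)
  qed
  show ?thesis
    unfolding a3 H Lrefl using L_def x_def by (simp add: L_def x_def)
qed

end
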